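(* Assume (A). Then for all $t>t_0$ and $s\in(0,t)$, $$\inf_{f\in\mathcal U^{s,t}}I(f)=\Upsilon(s,t):=\begin{cases}\Lambda_{s,t}(b+c_2t,\ b+c_2t-c_1s), & \text{if } k(s,t)>c_1s,\\[2pt] \dfrac{(b+c_2t)^2}{2v(t)}, & \text{if } k(s,t)\le c_1s.\end{cases}$$
   Context: Let $v:[0,\infty)\to[0,\infty)$ be continuous with $v(0)=0$ and $\lim_{t\to\infty}v(t)/t^{\alpha}=0$ for some $\alpha<2$; $A$ is a centered Gaussian process on $\mathbb R$ with continuous paths, $A(0)=0$, stationary increments and $\mathrm{Var}(A(t)-A(s))=v(|t-s|)$; $\Gamma(s,t):=\tfrac12(v(|s|)+v(|t|)-v(|t-s|))$. $\Omega$ is the space of continuous $\omega:\mathbb R\to\mathbb R$ with $\omega(0)=0$, $\omega(t)/(1+|t|)\to0$ as $t\to\pm\infty$; $R$ is the reproducing kernel Hilbert space of $\Gamma$ and $I(\omega)=\frac12\|\omega\|_R^2$ on $R$, $\infty$ elsewhere. Fix $b>0$, $c_1>c_2>0$, $t_0:=b/(c_1-c_2)$, and $\mathcal U^{s,t}:=\{f\in\Omega:-f(-t)\ge b+c_2t,\ f(-s)-f(-t)\ge b+c_2t-c_1s\}$. For $0<s<t$ let $\Sigma(s,t):=\begin{pmatrix}v(t)&\Gamma(s,t)\\ \Gamma(s,t)&v(s)\end{pmatrix}$, assumed nonsingular, and $\Lambda_{s,t}(y,z):=\frac12(y,z)\,\Sigma(t-s,t)^{-1}(y,z)^{\top}$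 (the large-deviation rate function of the pair $(\frac1n\sum_iA_i(-t,0),\frac1n\sum_iA_i(-t,-s))$). Let $k(s,t):=\mathbb E(A(s)\mid A(t)=b+c_2t)=\frac{\Gamma(s,t)}{v(t)}(b+c_2t)$. Assumption (A): $\sqrt{v}\in C^2([0,\infty))$ and $\sqrt v$ is strictly increasing and strictly concave. *)

theory Defs
  imports "HOL-Probability.Probability"
begin

definition Gam :: "(real \<Rightarrow> real) \<Rightarrow> real \<Rightarrow> real \<Rightarrow> real" where
  "Gam v s t = (v \<bar>s\<bar> + v \<bar>t\<bar> - v \<bar>t - s\<bar>) / 2"

text \<open>A is a centered Gaussian process on (M), indexed by the reals, with continuous
  paths, A(0)=0 and covariance kernel K: every finite linear combination
  sum c_i A(t_i) is a centered normal variable with variance sum c_i c_j K(t_i,t_j)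
  (stated through its characteristic function, which also covers variance 0).\<close>
definition centered_gaussian_process ::
    "'a measure \<Rightarrow> (real \<Rightarrow> 'a \<Rightarrow> real) \<Rightarrow> (real \<Rightarrow> real \<Rightarrow> real) \<Rightarrow> bool" where
  "centered_gaussian_process M A K \<longleftrightarrow>
     prob_space M \<and>
     (\<forall>t. A t \<in> borel_measurable M) \<and>
     (\<forall>\<omega>\<in>space M. continuous_on UNIV (\<lambda>t. A t \<omega>) \<and> A 0 \<omega> = 0) \<and>
     (\<forall>(F::real set) (c::real \<Rightarrow> real). finite F \<longrightarrow>
        (\<forall>u. char (distr M borel (\<lambda>\<omega>. \<Sum>t\<in>F. c t * A t \<omega>)) u =
             complex_of_real (exp (- ((\<Sum>p\<in>F. \<Sum>q\<in>F. c p * c q * K p q) * u\<^sup>2 / 2)))))"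

definition Omega :: "(real \<Rightarrow> real) set" where
  "Omega = {\<omega>. continuous_on UNIV \<omega> \<and> \<omega> 0 = 0 \<and>
              ((\<lambda>t. \<omega> t / (1 + \<bar>t\<bar>)) \<longlongrightarrow> 0) at_top \<and>
              ((\<lambda>t. \<omega> t / (1 + \<bar>t\<bar>)) \<longlongrightarrow> 0) at_bot}"

text \<open>Squared RKHS norm of f for the positive semidefinite kernel K (Aronszajn/Loeve):
  the supremum of (sum c_i f(t_i))^2 / (sum c_i c_j K(t_i,t_j)) over finite families,
  with the convention 0/0 = 0 and a/0 = infinity for a > 0.  It is finite iff f lies
  in the RKHS of K, and then it equals the squared RKHS norm.\<close>
definition rkhs_sq_norm :: "(real \<Rightarrow> real \<Rightarrow> real) \<Rightarrow> (real \<Rightarrow> real) \<Rightarrow> ereal" where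
  "rkhs_sq_norm K f =
     (SUP Fc \<in> {(F::real set, c::real \<Rightarrow> real). finite F}.
        (let F = fst Fc; c = snd Fc;
             L = (\<Sum>t\<in>F. c t * f t);
             Q = (\<Sum>p\<in>F. \<Sum>q\<in>F. c p * c q * K p q)
         in if Q = 0 then (if L = 0 then 0 else \<infinity>) else ereal (L\<^sup>2 / Q)))"

text \<open>The rate function I: half the squared RKHS norm of Gamma on Omega,
  infinity outside (R is contained in Omega; outside R the norm is infinite).\<close>
definition rateI :: "(real \<Rightarrow> real) \<Rightarrow> (real \<Rightarrow> real) \<Rightarrow> ereal" where
  "rateI v f = (if f \<in> Omega then rkhs_sq_norm (Gam v) f / 2 else \<infinity>)"

definition Uset :: "real \<Rightarrow> real \<Rightarrow> real \<Rightarrow> real \<Rightarrow> real \<Rightarrow> (real \<Rightarrow> real) set" where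
  "Uset b c1 c2 s t = {f \<in> Omega. - f (- t) \<ge> b + c2 * t \<and>
                                  f (- s) - f (- t) \<ge> b + c2 * t - c1 * s}"

text \<open>Determinant of Sigma(s,t) = [[v t, Gamma(s,t)],[Gamma(s,t), v s]].\<close>
definition detSigma :: "(real \<Rightarrow> real) \<Rightarrow> real \<Rightarrow> real \<Rightarrow> real" where
  "detSigma v s t = v t * v s - (Gam v s t)\<^sup>2"

text \<open>Lambda_{s,t}(y,z) = 1/2 (y,z) Sigma(t-s,t)^{-1} (y,z)^T, with the 2x2 inverse written out.\<close>
definition Lam :: "(real \<Rightarrow> real) \<Rightarrow> real \<Rightarrow> real \<Rightarrow> real \<Rightarrow> real \<Rightarrow> real" where
  "Lam v s t y z =
     (v (t - s) * y\<^sup>2 - 2 * Gam v (t - s) t * y * z + v t * z\<^sup>2) / (2 * detSigma v (t - s) t)"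

definition kfun :: "(real \<Rightarrow> real) \<Rightarrow> real \<Rightarrow> real \<Rightarrow> real \<Rightarrow> real \<Rightarrow> real" where
  "kfun v b c2 s t = Gam v s t / v t * (b + c2 * t)"

definition Upsilon :: "(real \<Rightarrow> real) \<Rightarrow> real \<Rightarrow> real \<Rightarrow> real \<Rightarrow> real \<Rightarrow> real \<Rightarrow> real" where
  "Upsilon v b c1 c2 s t =
     (if kfun v b c2 s t > c1 * s then Lam v s t (b + c2 * t) (b + c2 * t - c1 * s)
      else (b + c2 * t)\<^sup>2 / (2 * v t))"

definition assumptionA :: "(real \<Rightarrow> real) \<Rightarrow> bool" where
  "assumptionA v \<longleftrightarrow>
     (\<exists>g1 g2. (\<forall>x\<ge>0. ((\<lambda>y. sqrt (v y)) has_real_derivative g1 x) (at x within {0..}) \<and>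
                      (g1 has_real_derivative g2 x) (at x within {0..})) \<and>
              continuous_on {0..} g2) \<and>
     strict_mono_on {0..} (\<lambda>y. sqrt (v y)) \<and>
     (\<forall>x\<ge>0. \<forall>y\<ge>0. \<forall>\<theta>. x \<noteq> y \<and> 0 < \<theta> \<and> \<theta> < 1 \<longrightarrow>
        sqrt (v (\<theta> * x + (1 - \<theta>) * y)) > \<theta> * sqrt (v x) + (1 - \<theta>) * sqrt (v y))"

end

theory Submission
  imports Defs
begin


lemma gp_psd:
  assumes gp: "centered_gaussian_process M A K" and fin: "finite F"
  shows "0 \<le> (\<Sum>p\<in>F. \<Sum>q\<in>F. c p * c q * K p q)"
proof -
  let ?Q = "(\<Sum>p\<in>F. \<Sum>q\<in>F. c p * c q * K p q)"
  have ps: "prob_space M" and meas: "\<And>t. A t \<in> borel_measurable M"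
    using gp unfolding centered_gaussian_process_def by auto
  have ch: "char (distr M borel (\<lambda>\<omega>. \<Sum>t\<in>F. c t * A t \<omega>)) 1 = complex_of_real (exp (- (?Q * 1\<^sup>2 / 2)))"
    using gp fin unfolding centered_gaussian_process_def by blast
  have "(\<lambda>\<omega>. \<Sum>t\<in>F. c t * A t \<omega>) \<in> borel_measurable M"
    using meas by (intro borel_measurable_sum borel_measurable_times borel_measurable_const) auto
  then have rd: "real_distribution (distr M borel (\<lambda>\<omega>. \<Sum>t\<in>F. c t * A t \<omega>))"
    using prob_space.real_distribution_distr[OF ps] by auto
  have "norm (char (distr M borel (\<lambda>\<omega>. \<Sum>t\<in>F. c t * A t \<omega>)) 1) \<le> 1"
    using real_distribution.cmod_char_le_1[OF rd] .
  then have "exp (- (?Q / 2)) \<le> 1" using ch by simp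
  then show ?thesis by simp
qed



lemma discr_le:
  fixes a b cc :: real
  assumes H: "\<And>l. 0 \<le> cc + 2 * l * b + l\<^sup>2 * a" and a: "0 \<le> a"
  shows "b\<^sup>2 \<le> a * cc"
proof (cases "a = 0")
  case True
  show ?thesis
  proof (rule ccontr)
    assume "\<not> ?thesis"
    then have "b \<noteq> 0" using True by simp
    have "0 \<le> cc + 2 * (- (cc + 1) / (2 * b)) * b" using H[of "- (cc + 1) / (2 * b)"] True by simp
    also have "\<dots> = -1" using \<open>b \<noteq> 0\<close> by (simp add: field_simps)
    finally show False by simp
  qed
next
  case False
  then have ap: "a > 0" using a by simp
  have "0 \<le> cc + 2 * (- b / a) * b + (- b / a)\<^sup>2 * a" using H .
  also have "\<dots> = cc - b\<^sup>2 / a" using ap by (simp add: field_simps power2_eq_square)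
  finally have "b\<^sup>2 / a \<le> cc" by simp
  then show ?thesis using ap by (simp add: field_simps mult.commute)
qed

definition bil :: "(real \<Rightarrow> real \<Rightarrow> real) \<Rightarrow> real set \<Rightarrow> (real \<Rightarrow> real) \<Rightarrow> (real \<Rightarrow> real) \<Rightarrow> real" where
  "bil K S d e = (\<Sum>p\<in>S. \<Sum>q\<in>S. d p * e q * K p q)"

lemma bil_expand:
  "bil K S (\<lambda>x. d x + l * e x) (\<lambda>x. d x + l * e x) =
   bil K S d d + l * (bil K S d e + bil K S e d) + l\<^sup>2 * bil K S e e"
  unfolding bil_def
  by (simp add: algebra_simps sum.distrib sum_distrib_left power2_eq_square)

lemma bil_sym:
  assumes "\<And>p q. K p q = K q p"
  shows "bil K S d e = bil K S e d"
  unfolding bil_def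
  by (subst sum.swap) (simp add: assms mult.commute mult.left_commute)

lemma bil_restrict:
  assumes fin: "finite S" and sub: "F \<subseteq> S" "G \<subseteq> S"
  shows "bil K S (\<lambda>x. if x \<in> F then d x else 0) (\<lambda>x. if x \<in> G then e x else 0)
       = (\<Sum>p\<in>F. \<Sum>q\<in>G. d p * e q * K p q)"
proof -
  have fF: "finite F" "finite G" using fin sub finite_subset by auto
  have "bil K S (\<lambda>x. if x \<in> F then d x else 0) (\<lambda>x. if x \<in> G then e x else 0)
      = (\<Sum>p\<in>S. (if p \<in> F then d p else 0) * (\<Sum>q\<in>S. (if q \<in> G then e q else 0) * K p q))"
    unfolding bil_def by (simp add: sum_distrib_left mult.assoc)
  also have "\<dots> = (\<Sum>p\<in>S. (if p \<in> F then d p else 0) * (\<Sum>q\<in>G. e q * K p q))"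
  proof -
    have "\<And>p. (\<Sum>q\<in>S. (if q \<in> G then e q else 0) * K p q) = (\<Sum>q\<in>G. e q * K p q)"
      using sum.mono_neutral_cong_left[OF fin sub(2)] by (smt (verit, best) DiffD2 mult_eq_0_iff)
    then show ?thesis by simp
  qed
  also have "\<dots> = (\<Sum>p\<in>F. d p * (\<Sum>q\<in>G. e q * K p q))"
    using sum.mono_neutral_cong_right[OF fin sub(1)] by (smt (verit, best) DiffD2 mult_eq_0_iff)
  also have "\<dots> = (\<Sum>p\<in>F. \<Sum>q\<in>G. d p * e q * K p q)"
    by (simp add: sum_distrib_left mult.assoc)
  finally show ?thesis .
qed

lemma kernel_cs:
  fixes K :: "real \<Rightarrow> real \<Rightarrow> real" and c \<gamma> :: "real \<Rightarrow> real"
  assumes psd: "\<And>F c. finite F \<Longrightarrow> 0 \<le> (\<Sum>p\<in>F. \<Sum>q\<in>F. c p * c q * K p q)"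
    and sym: "\<And>p q. K p q = K q p"
    and fF: "finite F" and fG: "finite G"
  shows "(\<Sum>x\<in>F. c x * (\<Sum>g\<in>G. \<gamma> g * K g x))\<^sup>2
      \<le> (\<Sum>p\<in>G. \<Sum>q\<in>G. \<gamma> p * \<gamma> q * K p q) * (\<Sum>p\<in>F. \<Sum>q\<in>F. c p * c q * K p q)"
proof -
  define S where "S = F \<union> G"
  have fS: "finite S" using fF fG S_def by simp
  define c' where "c' = (\<lambda>x. if x \<in> F then c x else 0)"
  define g' where "g' = (\<lambda>x. if x \<in> G then \<gamma> x else 0)"
  have e1: "bil K S c' c' = (\<Sum>p\<in>F. \<Sum>q\<in>F. c p * c q * K p q)"
    unfolding c'_def by (rule bil_restrict[OF fS]) (auto simp: S_def)
  have e2: "bil K S g' g' = (\<Sum>p\<in>G. \<Sum>q\<in>G. \<gamma> p * \<gamma> q * K p q)"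
    unfolding g'_def by (rule bil_restrict[OF fS]) (auto simp: S_def)
  have e3: "bil K S g' c' = (\<Sum>p\<in>G. \<Sum>q\<in>F. \<gamma> p * c q * K p q)"
    unfolding g'_def c'_def by (rule bil_restrict[OF fS]) (auto simp: S_def)
  also have "\<dots> = (\<Sum>x\<in>F. c x * (\<Sum>g\<in>G. \<gamma> g * K g x))"
    by (subst sum.swap) (simp add: sum_distrib_left mult.commute mult.left_commute)
  finally have e3': "bil K S g' c' = (\<Sum>x\<in>F. c x * (\<Sum>g\<in>G. \<gamma> g * K g x))" .
  have sy: "bil K S c' g' = bil K S g' c'" by (rule bil_sym[OF sym])
  have H: "0 \<le> bil K S c' c' + 2 * l * bil K S g' c' + l\<^sup>2 * bil K S g' g'" for l
  proof -
    have "0 \<le> bil K S (\<lambda>x. c' x + l * g' x) (\<lambda>x. c' x + l * g' x)"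
      unfolding bil_def by (rule psd[OF fS])
    then show ?thesis unfolding bil_expand sy by (simp add: algebra_simps)
  qed
  have "0 \<le> bil K S g' g'" unfolding bil_def by (rule psd[OF fS])
  from discr_le[OF H this] show ?thesis using e1 e2 e3' by simp
qed

lemma rkhs_upper:
  fixes K :: "real \<Rightarrow> real \<Rightarrow> real" and f \<gamma> :: "real \<Rightarrow> real"
  assumes psd: "\<And>F c. finite F \<Longrightarrow> 0 \<le> (\<Sum>p\<in>F. \<Sum>q\<in>F. c p * c q * K p q)"
    and sym: "\<And>p q. K p q = K q p"
    and fG: "finite G"
    and f: "\<And>x. f x = (\<Sum>g\<in>G. \<gamma> g * K g x)"
  shows "rkhs_sq_norm K f \<le> ereal (\<Sum>p\<in>G. \<Sum>q\<in>G. \<gamma> p * \<gamma> q * K p q)"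
  unfolding rkhs_sq_norm_def
proof (rule SUP_least)
  fix Fc :: "real set \<times> (real \<Rightarrow> real)"
  assume "Fc \<in> {(F, c). finite F}"
  then obtain F c where Fc: "Fc = (F, c)" and fF: "finite F" by auto
  let ?N = "(\<Sum>p\<in>G. \<Sum>q\<in>G. \<gamma> p * \<gamma> q * K p q)"
  let ?Q = "(\<Sum>p\<in>F. \<Sum>q\<in>F. c p * c q * K p q)"
  let ?L = "(\<Sum>t\<in>F. c t * f t)"
  have cs: "?L\<^sup>2 \<le> ?N * ?Q" using kernel_cs[OF psd sym fF fG, of c \<gamma>] by (simp add: f)
  have N0: "0 \<le> ?N" by (rule psd[OF fG])
  have Q0: "0 \<le> ?Q" by (rule psd[OF fF])
  have "(if ?Q = 0 then if ?L = 0 then 0 else \<infinity> else ereal (?L\<^sup>2 / ?Q)) \<le> ereal ?N"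
  proof (cases "?Q = 0")
    case True
    then have "?L = 0" using cs by simp
    then show ?thesis using True N0 by simp
  next
    case False
    then have "?Q > 0" using Q0 by simp
    then have "?L\<^sup>2 / ?Q \<le> ?N" using cs by (simp add: divide_le_eq)
    then show ?thesis using False by simp
  qed
  then show "(let F = fst Fc; c = snd Fc; L = \<Sum>t\<in>F. c t * f t; Q = \<Sum>p\<in>F. \<Sum>q\<in>F. c p * c q * K p q
          in if Q = 0 then if L = 0 then 0 else \<infinity> else ereal (L\<^sup>2 / Q)) \<le> ereal ?N"
    by (simp add: Fc Let_def)
qed

lemma rkhs_lower:
  assumes fF: "finite F" and Q: "(\<Sum>p\<in>F. \<Sum>q\<in>F. c p * c q * K p q) > 0"
  shows "ereal ((\<Sum>t\<in>F. c t * f t)\<^sup>2 / (\<Sum>p\<in>F. \<Sum>q\<in>F. c p * c q * K p q)) \<le> rkhs_sq_norm K f"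
  unfolding rkhs_sq_norm_def
  apply (rule SUP_upper2[where i="(F, c)"])
  using fF Q by (auto simp: Let_def)



lemma hA_mono:
  assumes A: "assumptionA v" and "0 \<le> x" "x < y"
  shows "sqrt (v x) < sqrt (v y)"
  using A assms unfolding assumptionA_def strict_mono_on_def by auto

lemma hA_mono_le:
  assumes A: "assumptionA v" and "0 \<le> x" "x \<le> y"
  shows "sqrt (v x) \<le> sqrt (v y)"
  using hA_mono[OF A, of x y] assms by (cases "x = y") auto

lemma hA_star:
  assumes A: "assumptionA v" and v0: "v 0 = 0" and x: "0 \<le> x" and l: "0 \<le> l" "l \<le> 1"
  shows "l * sqrt (v x) \<le> sqrt (v (l * x))"
proof -
  consider "l = 0" | "l = 1" | "x = 0" | "0 < l" "l < 1" "x \<noteq> 0" using l by linarith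
  then show ?thesis
  proof cases
    case 4
    have "sqrt (v (l * x + (1 - l) * 0)) > l * sqrt (v x) + (1 - l) * sqrt (v 0)"
      using A x 4 unfolding assumptionA_def by blast
    then show ?thesis using v0 by simp
  qed (auto simp: v0)
qed

lemma hA_subadd:
  assumes A: "assumptionA v" and v0: "v 0 = 0" and a: "0 \<le> a" and b: "0 \<le> b"
  shows "sqrt (v (a + b)) \<le> sqrt (v a) + sqrt (v b)"
proof (cases "a + b = 0")
  case True
  then have "a = 0" "b = 0" using a b by auto
  then show ?thesis using v0 by simp
next
  case False
  then have ab: "a + b > 0" using a b by simp
  have 1: "a / (a + b) * sqrt (v (a + b)) \<le> sqrt (v (a / (a + b) * (a + b)))"
    by (rule hA_star[OF A v0]) (use a b ab in auto)
  have 2: "b / (a + b) * sqrt (v (a + b)) \<le> sqrt (v (b / (a + b) * (a + b)))"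
    by (rule hA_star[OF A v0]) (use a b ab in auto)
  have "sqrt (v (a + b)) = a / (a + b) * sqrt (v (a + b)) + b / (a + b) * sqrt (v (a + b))"
  proof -
    have "a / (a + b) + b / (a + b) = 1" using ab by (simp add: add_divide_distrib[symmetric])
    then show ?thesis by (metis distrib_right mult_1)
  qed
  also have "\<dots> \<le> sqrt (v a) + sqrt (v b)" using 1 2 ab by simp
  finally show ?thesis .
qed

lemma hA_ratio:
  assumes A: "assumptionA v" and v0: "v 0 = 0" and a: "0 < a" "a \<le> b"
  shows "a * sqrt (v b) \<le> b * sqrt (v a)"
proof -
  have "a / b * sqrt (v b) \<le> sqrt (v (a / b * b))"
    by (rule hA_star[OF A v0]) (use a in auto)
  then show ?thesis using a by (simp add: field_simps)
qed

lemma hA_absdiff: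
  assumes A: "assumptionA v" and v0: "v 0 = 0" and a: "0 \<le> a" and b: "0 \<le> b"
  shows "\<bar>sqrt (v a) - sqrt (v b)\<bar> \<le> sqrt (v \<bar>a - b\<bar>)"
proof (cases "a \<le> b")
  case True
  have "sqrt (v (a + (b - a))) \<le> sqrt (v a) + sqrt (v (b - a))"
    by (rule hA_subadd[OF A v0]) (use a True in auto)
  moreover have "sqrt (v a) \<le> sqrt (v b)" by (rule hA_mono_le[OF A a True])
  moreover have "\<bar>a - b\<bar> = b - a" using True by simp
  ultimately show ?thesis using True by (simp add: abs_le_iff)
next
  case False
  have "sqrt (v (b + (a - b))) \<le> sqrt (v b) + sqrt (v (a - b))"
    by (rule hA_subadd[OF A v0]) (use b False in auto)
  moreover have "sqrt (v b) \<le> sqrt (v a)" by (rule hA_mono_le[OF A b]) (use False in auto)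
  moreover have "\<bar>a - b\<bar> = a - b" using False by simp
  ultimately show ?thesis using False by (simp add: abs_le_iff)
qed

lemma hA_growth:
  assumes vn: "\<forall>x\<ge>0. v x \<ge> 0" and g: "\<exists>\<alpha><2. ((\<lambda>x. v x / x powr \<alpha>) \<longlongrightarrow> 0) at_top"
  shows "((\<lambda>y. sqrt (v y) / (1 + y)) \<longlongrightarrow> 0) at_top"
proof -
  obtain \<alpha> where al: "\<alpha> < 2" and lim: "((\<lambda>x. v x / x powr \<alpha>) \<longlongrightarrow> 0) at_top" using g by blast
  have l2: "((\<lambda>x. sqrt (v x / x powr \<alpha>)) \<longlongrightarrow> 0) at_top"
    using tendsto_real_sqrt[OF lim] by simp
  show ?thesis
  proof (rule Lim_null_comparison[OF _ l2])
    show "\<forall>\<^sub>F x in at_top. norm (sqrt (v x) / (1 + x)) \<le> sqrt (v x / x powr \<alpha>)"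
      using eventually_ge_at_top[of "1::real"]
    proof eventually_elim
      case (elim y)
      have p1: "y powr (\<alpha> / 2) \<le> y powr 1" using elim al by (intro powr_mono) auto
      have pp: "0 < y powr (\<alpha> / 2)" using elim by simp
      have sq: "sqrt (y powr \<alpha>) = y powr (\<alpha> / 2)"
        using elim by (simp add: powr_half_sqrt[symmetric] powr_powr)
      have "sqrt (v y / y powr \<alpha>) = sqrt (v y) / y powr (\<alpha> / 2)"
        by (simp add: real_sqrt_divide sq)
      moreover have vy: "0 \<le> v y" using elim vn by simp
      moreover have "sqrt (v y) / (1 + y) \<le> sqrt (v y) / y powr (\<alpha> / 2)"
        using p1 pp elim vy by (intro divide_left_mono) auto
      moreover have "0 \<le> sqrt (v y) / (1 + y)" using elim vy by simp
      ultimately show ?case using elim by simp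
    qed
  qed
qed



lemma gam_bound:
  assumes A: "assumptionA v" and v0: "v 0 = 0" and vn: "\<forall>x\<ge>0. v x \<ge> 0"
  shows "\<bar>Gam v x0 x\<bar> \<le> v \<bar>x0\<bar> + sqrt (v \<bar>x0\<bar>) * sqrt (v \<bar>x\<bar>)"
proof -
  define a where "a = \<bar>x\<bar>"
  define b where "b = \<bar>x - x0\<bar>"
  define d where "d = \<bar>x0\<bar>"
  have a0: "0 \<le> a" and b0: "0 \<le> b" and d0: "0 \<le> d" using a_def b_def d_def by auto
  have abd: "\<bar>a - b\<bar> \<le> d" unfolding a_def b_def d_def by linarith
  have va: "v a = (sqrt (v a))\<^sup>2" using vn a0 by simp
  have vb: "v b = (sqrt (v b))\<^sup>2" using vn b0 by simp
  have vd: "v d = (sqrt (v d))\<^sup>2" using vn d0 by simp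
  have h1: "\<bar>sqrt (v a) - sqrt (v b)\<bar> \<le> sqrt (v d)"
    using order_trans[OF hA_absdiff[OF A v0 a0 b0] hA_mono_le[OF A _ abd]] by simp
  have ha: "0 \<le> sqrt (v a)" and hb: "0 \<le> sqrt (v b)" and hd: "0 \<le> sqrt (v d)"
    using vn a0 b0 d0 by auto
  have hb2: "sqrt (v b) \<le> sqrt (v a) + sqrt (v d)" using h1 by (simp add: abs_le_iff)
  have "v a - v b = (sqrt (v a) - sqrt (v b)) * (sqrt (v a) + sqrt (v b))"
    by (subst va, subst vb) (simp add: power2_eq_square algebra_simps)
  then have "\<bar>v a - v b\<bar> = \<bar>sqrt (v a) - sqrt (v b)\<bar> * (sqrt (v a) + sqrt (v b))"
    using ha hb by (simp add: abs_mult)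
  also have "\<dots> \<le> sqrt (v d) * (2 * sqrt (v a) + sqrt (v d))"
    using h1 hb2 ha hb hd by (intro mult_mono) auto
  finally have "\<bar>v a - v b\<bar> \<le> 2 * sqrt (v d) * sqrt (v a) + v d"
    using vd by (simp add: algebra_simps power2_eq_square)
  moreover have "Gam v x0 x = (v d + v a - v b) / 2"
    unfolding Gam_def a_def b_def d_def by simp
  moreover have "0 \<le> v d" using vn d0 by simp
  ultimately show ?thesis unfolding a_def d_def by (simp add: abs_le_iff)
qed

lemma abs_at_top: "filterlim (\<lambda>x::real. \<bar>x\<bar>) at_top at_top"
  by (rule filterlim_at_top_mono[OF filterlim_ident]) (intro always_eventually, auto)

lemma abs_at_bot: "filterlim (\<lambda>x::real. \<bar>x\<bar>) at_top at_bot"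
  by (rule filterlim_at_top_mono[OF filterlim_uminus_at_top_at_bot]) (intro always_eventually, auto)

lemma gam_lim:
  assumes A: "assumptionA v" and v0: "v 0 = 0" and vn: "\<forall>x\<ge>0. v x \<ge> 0"
    and g: "\<exists>\<alpha><2. ((\<lambda>x. v x / x powr \<alpha>) \<longlongrightarrow> 0) at_top"
    and F: "filterlim (\<lambda>x::real. \<bar>x\<bar>) at_top F"
  shows "((\<lambda>x. Gam v x0 x / (1 + \<bar>x\<bar>)) \<longlongrightarrow> 0) F"
proof -
  define R where "R = (\<lambda>y. v \<bar>x0\<bar> * (1 / (1 + y)) + sqrt (v \<bar>x0\<bar>) * (sqrt (v y) / (1 + y)))"
  have i: "((\<lambda>y::real. 1 / (1 + y)) \<longlongrightarrow> 0) at_top"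
  proof -
    have "filterlim (\<lambda>y::real. 1 + y) at_top at_top"
      by (rule filterlim_at_top_mono[OF filterlim_ident]) (intro always_eventually, auto)
    then show ?thesis by (rule tendsto_divide_0[OF tendsto_const filterlim_at_top_imp_at_infinity])
  qed
  have R: "(R \<longlongrightarrow> 0) at_top"
    unfolding R_def using tendsto_add[OF tendsto_mult[OF tendsto_const i] tendsto_mult[OF tendsto_const hA_growth[OF vn g]]]
    by simp
  have RF: "((\<lambda>x. R \<bar>x\<bar>) \<longlongrightarrow> 0) F" using filterlim_compose[OF R F] .
  show ?thesis
  proof (rule Lim_null_comparison[OF _ RF], rule always_eventually, rule allI)
    fix x :: real
    have p: "0 < 1 + \<bar>x\<bar>" by simp
    have "norm (Gam v x0 x / (1 + \<bar>x\<bar>)) = \<bar>Gam v x0 x\<bar> / (1 + \<bar>x\<bar>)"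
      by simp
    also have "\<dots> \<le> (v \<bar>x0\<bar> + sqrt (v \<bar>x0\<bar>) * sqrt (v \<bar>x\<bar>)) / (1 + \<bar>x\<bar>)"
      using gam_bound[OF A v0 vn, of x0 x] p by (intro divide_right_mono) auto
    also have "\<dots> = R \<bar>x\<bar>" unfolding R_def by (simp add: add_divide_distrib)
    finally show "norm (Gam v x0 x / (1 + \<bar>x\<bar>)) \<le> R \<bar>x\<bar>" .
  qed
qed

lemma gam_cont:
  assumes vc: "continuous_on {0..} v"
  shows "continuous_on UNIV (\<lambda>x. Gam v x0 x)"
proof -
  have c: "continuous_on UNIV (\<lambda>x. v (f x))" if "continuous_on UNIV f" "\<And>x. f x \<ge> 0" for f :: "real \<Rightarrow> real"
    by (rule continuous_on_compose2[OF vc that(1)]) (use that(2) in auto)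
  show ?thesis unfolding Gam_def
    by (intro continuous_on_divide continuous_on_add continuous_on_diff continuous_on_const c
          continuous_on_rabs continuous_on_id) auto
qed

lemma comb_Omega:
  assumes A: "assumptionA v" and v0: "v 0 = 0" and vn: "\<forall>x\<ge>0. v x \<ge> 0"
    and g: "\<exists>\<alpha><2. ((\<lambda>x. v x / x powr \<alpha>) \<longlongrightarrow> 0) at_top"
    and vc: "continuous_on {0..} v"
  shows "(\<lambda>x. \<Sum>y\<in>G. \<gamma> y * Gam v y x) \<in> Omega"
proof -
  have lim: "((\<lambda>x. (\<Sum>y\<in>G. \<gamma> y * Gam v y x) / (1 + \<bar>x\<bar>)) \<longlongrightarrow> 0) F"
    if F: "filterlim (\<lambda>x::real. \<bar>x\<bar>) at_top F" for F
  proof -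
    have "((\<lambda>x. \<Sum>y\<in>G. \<gamma> y * (Gam v y x / (1 + \<bar>x\<bar>))) \<longlongrightarrow> 0) F"
      by (rule tendsto_null_sum, rule tendsto_mult_right_zero, rule gam_lim[OF A v0 vn g F])
    then show ?thesis by (simp add: sum_divide_distrib)
  qed
  have "Gam v y 0 = 0" for y unfolding Gam_def by (simp add: v0)
  then show ?thesis unfolding Omega_def
    using lim[OF abs_at_top] lim[OF abs_at_bot]
    by (auto intro!: continuous_on_sum continuous_on_mult continuous_on_const gam_cont[OF vc])
qed



lemma key_ineq:
  fixes x y z u s :: real
  assumes x: "0 \<le> x" and y: "0 \<le> y" and zx: "x \<le> z" and u: "0 < u" and s: "0 < s"
    and i: "u * z \<le> (u + s) * x" and ii: "z \<le> x + y"
    and iii: "s \<le> u \<Longrightarrow> s * x \<le> u * y" and iv: "u \<le> s \<Longrightarrow> u * y \<le> s * x"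
  shows "u * (z\<^sup>2 - y\<^sup>2 - x\<^sup>2) \<le> 2 * s * x\<^sup>2"
proof (cases "s \<le> u")
  case True
  have a: "u * (z - x) \<le> s * x" using i by (simp add: algebra_simps)
  have "u * (z\<^sup>2 - y\<^sup>2 - x\<^sup>2) = u * (z - x) * (z + x) - u * y\<^sup>2" by (simp add: algebra_simps power2_eq_square)
  also have "\<dots> \<le> s * x * (z + x) - u * y\<^sup>2" using a x zx by (intro diff_right_mono mult_right_mono) auto
  also have "\<dots> = s * x * (z - x) + 2 * s * x\<^sup>2 - u * y\<^sup>2" by (simp add: algebra_simps power2_eq_square)
  also have "s * x * (z - x) \<le> s * x * y" using ii s x by (intro mult_left_mono) auto
  also have "s * x * y \<le> u * y * y" using iii[OF True] y by (intro mult_right_mono) auto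
  finally show ?thesis by (simp add: power2_eq_square)
next
  case False
  have a: "u * (z - x) \<le> s * x" using i by (simp add: algebra_simps)
  have b: "u * y \<le> s * x" using iv False by simp
  have zy: "z - y \<le> x" using ii by simp
  have "u * (z\<^sup>2 - y\<^sup>2 - x\<^sup>2) = u * ((z - y) * (z + y)) - u * x\<^sup>2" by (simp add: algebra_simps power2_eq_square)
  also have "\<dots> \<le> u * (x * (z + y)) - u * x\<^sup>2" using zy u x y zx by (intro diff_right_mono mult_left_mono mult_right_mono) auto
  also have "\<dots> = x * (u * (z - x)) + x * (u * y)" by (simp add: algebra_simps power2_eq_square)
  also have "\<dots> \<le> x * (s * x) + x * (s * x)" using a b x by (intro add_mono mult_left_mono) auto
  finally show ?thesis by (simp add: power2_eq_square)
qed

lemma ereal_half_ge: "ereal (2 * y) \<le> X \<Longrightarrow> ereal y \<le> X / 2"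
  by (cases X) auto

lemma ereal_half_le: "X \<le> ereal (2 * y) \<Longrightarrow> X / 2 \<le> ereal y"
  by (cases X) auto



theorem lemma3p4:
  fixes v :: "real \<Rightarrow> real" and b c1 c2 s t :: real
  assumes v_cont: "continuous_on {0..} v"
    and v_nonneg: "\<forall>x\<ge>0. v x \<ge> 0"
    and v0: "v 0 = 0"
    and v_growth: "\<exists>\<alpha><2. ((\<lambda>x. v x / x powr \<alpha>) \<longlongrightarrow> 0) at_top"
    and gp: "\<exists>(M :: 'a measure) A. centered_gaussian_process M A (Gam v)"
    and nonsing: "\<forall>s' t'. 0 < s' \<and> s' < t' \<longrightarrow> detSigma v s' t' \<noteq> 0"
    and A: "assumptionA v"
    and b: "b > 0" and c: "c1 > c2" "c2 > 0"
    and t: "t > b / (c1 - c2)"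
    and s: "0 < s" "s < t"
  shows "(INF f \<in> Uset b c1 c2 s t. rateI v f) = ereal (Upsilon v b c1 c2 s t)"
proof -
  obtain M A where gpM: "centered_gaussian_process (M::'a measure) A (Gam v)" using gp by blast
  have psd: "\<And>F c. finite F \<Longrightarrow> 0 \<le> (\<Sum>p\<in>F. \<Sum>q\<in>F. c p * c q * Gam v p q)"
    by (rule gp_psd[OF gpM])
  have sym: "\<And>p q. Gam v p q = Gam v q p"
    unfolding Gam_def by (simp add: abs_minus_commute add.commute)
  define B where "B = b + c2 * t"
  define u where "u = t - s"
  define Z0 where "Z0 = B - c1 * s"
  define p where "p = v u"
  define q where "q = v t"
  define a where "a = v s"
  define G where "G = (p + q - a) / 2"
  define H where "H = (a + q - p) / 2"
  define D where "D = q * p - G\<^sup>2"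
  define x where "x = sqrt p"
  define y where "y = sqrt a"
  define z where "z = sqrt q"
  have u0: "0 < u" "u < t" using s u_def by auto
  have t0: "0 < t" using s by simp
  have B0: "0 < B" unfolding B_def using b c t0 by (simp add: add_pos_pos)
  have cB: "B < c1 * t"
  proof -
    have "b < (c1 - c2) * t" using t c by (simp add: pos_divide_less_eq mult.commute)
    then show ?thesis unfolding B_def by (simp add: algebra_simps)
  qed
  have hpos: "0 < sqrt (v r)" if "0 < r" for r
    using hA_mono[OF A, of 0 r] that v0 by simp
  have x0: "0 < x" and y0: "0 < y" and z0: "0 < z"
    using hpos u0 s t0 x_def y_def z_def p_def a_def q_def by auto
  have px: "p = x\<^sup>2" and ay: "a = y\<^sup>2" and qz: "q = z\<^sup>2"
    using v_nonneg u0 s t0 unfolding x_def y_def z_def p_def a_def q_def by auto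
  have p0: "0 < p" and q0: "0 < q" and a0: "0 < a" using px ay qz x0 y0 z0 by auto
  have zx: "x \<le> z" unfolding x_def z_def p_def q_def using hA_mono_le[OF A] u0 by simp
  have zy: "y \<le> z" unfolding y_def z_def a_def q_def using hA_mono_le[OF A] s by simp
  have ii: "z \<le> x + y"
    using hA_subadd[OF A v0, of u s] u0 s unfolding x_def y_def z_def p_def a_def q_def u_def by simp
  have i: "u * z \<le> (u + s) * x"
    using hA_ratio[OF A v0, of u t] u0 unfolding x_def z_def p_def q_def u_def by simp
  have iii: "s * x \<le> u * y" if "s \<le> u"
    using hA_ratio[OF A v0, of s u] that s unfolding x_def y_def p_def a_def by simp
  have iv: "u * y \<le> s * x" if "u \<le> s"
    using hA_ratio[OF A v0, of u s] that u0 unfolding x_def y_def p_def a_def by simp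
  have key: "u * (q - a - p) \<le> 2 * s * p"
    using key_ineq[OF less_imp_le[OF x0] less_imp_le[OF y0] zx u0(1) s(1) i ii iii iv] px ay qz by simp
  have "y\<^sup>2 \<le> z\<^sup>2" using zy y0 by (intro power_mono) auto
  then have G0: "0 \<le> G" unfolding G_def using qz ay p0 by simp
  have Dge: "0 \<le> D"
  proof -
    have "G \<le> x * z"
    proof -
      have "(z - x)\<^sup>2 \<le> y\<^sup>2" using ii zx by (intro power_mono) auto
      then show ?thesis unfolding G_def px ay qz by (simp add: power2_eq_square algebra_simps)
    qed
    then have "G\<^sup>2 \<le> (x * z)\<^sup>2" using G0 by (intro power_mono) auto
    then show ?thesis unfolding D_def px qz by (simp add: power_mult_distrib mult.commute)
  qed
  have Dne: "D \<noteq> 0"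
  proof -
    have "detSigma v u t \<noteq> 0" using nonsing u0 by blast
    moreover have "Gam v u t = G" unfolding Gam_def G_def p_def q_def a_def using u0 by (simp add: u_def)
    ultimately show ?thesis unfolding detSigma_def D_def q_def p_def by simp
  qed
  have D0: "0 < D" using Dge Dne by simp
  have GZ: "G * Z0 \<le> p * B"
  proof -
    have Zt: "Z0 * t \<le> B * u"
    proof -
      have "B * s \<le> c1 * t * s" using cB s by simp
      then show ?thesis unfolding Z0_def u_def by (simp add: algebra_simps)
    qed
    from mult_left_mono[OF Zt G0] have 1: "G * Z0 * t \<le> G * B * u" by (simp add: mult.assoc)
    have Gu: "G * u \<le> p * t" using key unfolding G_def u_def by (simp add: algebra_simps)
    from mult_left_mono[OF Gu less_imp_le[OF B0]] have "G * B * u \<le> p * B * t" by (simp add: algebra_simps)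
    with 1 have "(G * Z0) * t \<le> (p * B) * t" by simp
    then show ?thesis using t0 by simp
  qed
  have K11: "Gam v (-t) (-t) = q" unfolding Gam_def q_def using t0 v0 by simp
  have K22: "Gam v (-s) (-s) = a" unfolding Gam_def a_def using s v0 by simp
  have K12: "Gam v (-t) (-s) = H" unfolding Gam_def H_def a_def q_def p_def u_def using s t0 by simp
  have K21: "Gam v (-s) (-t) = H" using K12 sym by simp
  have ts: "-t \<noteq> -s" using s by simp
  have kf: "kfun v b c2 s t = H / q * B"
    unfolding kfun_def B_def H_def a_def q_def p_def u_def Gam_def using s t0 by simp
  have GH: "H = q - G" unfolding G_def H_def by (simp add: field_simps)
  have aG: "a = p + q - 2 * G" unfolding G_def by (simp add: field_simps)
  have GamG: "Gam v (t - s) t = G" unfolding Gam_def G_def p_def q_def a_def using u0 by (simp add: u_def)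
  define al where "al = p * B - G * Z0"
  define be where "be = q * Z0 - G * B"
  define N where "N = p * B\<^sup>2 - 2 * G * B * Z0 + q * Z0\<^sup>2"
  have al0: "0 \<le> al" using GZ unfolding al_def by simp
  have pN: "p * N = al\<^sup>2 + D * Z0\<^sup>2" unfolding N_def al_def D_def by (simp add: power2_eq_square algebra_simps)
  have N0: "0 < N"
  proof (cases "Z0 = 0")
    case True then show ?thesis unfolding N_def using p0 B0 by simp
  next
    case False
    then have "0 < p * N" unfolding pN using D0 by (simp add: add_nonneg_pos)
    then show ?thesis using p0 by (simp add: zero_less_mult_iff)
  qed
  have alB: "al * q + be * G = D * B" unfolding al_def be_def D_def by (simp add: power2_eq_square algebra_simps)
  have beZ: "al * G + be * p = D * Z0" unfolding al_def be_def D_def by (simp add: power2_eq_square algebra_simps)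
  have Nab: "al * B + be * Z0 = N" unfolding al_def be_def N_def by (simp add: power2_eq_square algebra_simps)
  have QN: "al\<^sup>2 * q + 2 * al * be * G + be\<^sup>2 * p = D * N"
    unfolding al_def be_def N_def D_def by (simp add: power2_eq_square algebra_simps)
  have Lam_eq: "Lam v s t B Z0 = N / (2 * D)"
    unfolding Lam_def GamG N_def D_def detSigma_def q_def p_def u_def by simp
  have Ups: "Upsilon v b c1 c2 s t = (if H / q * B > c1 * s then N / (2 * D) else B\<^sup>2 / (2 * q))"
    unfolding Upsilon_def kf Lam_eq[symmetric] B_def Z0_def q_def by simp
  have Uset_eq: "Uset b c1 c2 s t = {f \<in> Omega. - f (- t) \<ge> B \<and> f (- s) - f (- t) \<ge> Z0}"
    unfolding Uset_def B_def Z0_def by simp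
  have lower: "ereal (2 * Upsilon v b c1 c2 s t) \<le> rkhs_sq_norm (Gam v) f" if f: "f \<in> Uset b c1 c2 s t" for f
  proof -
    have X: "B \<le> - f (- t)" and Z: "Z0 \<le> f (- s) - f (- t)" using f unfolding Uset_eq by auto
    show ?thesis
    proof (cases "H / q * B > c1 * s")
      case False
      have "ereal ((\<Sum>r\<in>{-t}. (\<lambda>_. -1) r * f r)\<^sup>2 / (\<Sum>p\<in>{-t}. \<Sum>q\<in>{-t}. (\<lambda>_. -1::real) p * (\<lambda>_. -1) q * Gam v p q))
             \<le> rkhs_sq_norm (Gam v) f"
        by (rule rkhs_lower) (use K11 q0 in auto)
      moreover have "B\<^sup>2 \<le> (- f (- t))\<^sup>2" using X B0 by (intro power_mono) auto
      then have "B\<^sup>2 / q \<le> (- f (- t))\<^sup>2 / q" using q0 by (simp add: divide_right_mono)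
      ultimately have "ereal (B\<^sup>2 / q) \<le> rkhs_sq_norm (Gam v) f" using K11
        by (simp del: ereal_less_eq) (meson ereal_less_eq(3) order_trans)
      then show ?thesis using False q0 unfolding Ups by simp
    next
      case True
      have be0: "0 \<le> be"
      proof -
        have "c1 * s * q < H * B" using True q0 by (simp add: pos_less_divide_eq)
        then show ?thesis unfolding be_def Z0_def GH by (simp add: algebra_simps)
      qed
      define c where "c = (\<lambda>r. if r = -t then - (al + be) else be)"
      have Q: "(\<Sum>p\<in>{-t,-s}. \<Sum>q\<in>{-t,-s}. c p * c q * Gam v p q) = D * N"
      proof -
        have "(\<Sum>p\<in>{-t,-s}. \<Sum>q\<in>{-t,-s}. c p * c q * Gam v p q) = (al + be)\<^sup>2 * q - 2 * (al + be) * be * H + be\<^sup>2 * a"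
          unfolding c_def using ts by (simp add: K11 K12 K21 K22 power2_eq_square algebra_simps)
        also have "\<dots> = D * N" unfolding QN[symmetric] GH aG by (simp add: power2_eq_square algebra_simps)
        finally show ?thesis .
      qed
      have L: "(\<Sum>r\<in>{-t,-s}. c r * f r) = al * (- f (-t)) + be * (f (-s) - f (-t))"
        unfolding c_def using ts by (simp add: algebra_simps)
      have "al * B + be * Z0 \<le> al * (- f (-t)) + be * (f (-s) - f (-t))"
        using X Z al0 be0 by (intro add_mono mult_left_mono) auto
      then have LN: "N \<le> (\<Sum>r\<in>{-t,-s}. c r * f r)" unfolding L Nab .
      have "ereal ((\<Sum>r\<in>{-t,-s}. c r * f r)\<^sup>2 / (\<Sum>p\<in>{-t,-s}. \<Sum>q\<in>{-t,-s}. c p * c q * Gam v p q))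
             \<le> rkhs_sq_norm (Gam v) f"
        by (rule rkhs_lower) (use Q D0 N0 in auto)
      moreover have "N\<^sup>2 \<le> (\<Sum>r\<in>{-t,-s}. c r * f r)\<^sup>2" using LN N0 by (intro power_mono) auto
      then have "N\<^sup>2 / (D * N) \<le> (\<Sum>r\<in>{-t,-s}. c r * f r)\<^sup>2 / (D * N)"
        using D0 N0 by (simp add: divide_right_mono)
      moreover have "N\<^sup>2 / (D * N) = 2 * (N / (2 * D))" using N0 D0 by (simp add: power2_eq_square)
      ultimately have "ereal (2 * (N / (2 * D))) \<le> rkhs_sq_norm (Gam v) f" unfolding Q
        by (metis ereal_less_eq(3) order_trans)
      then show ?thesis using True unfolding Ups by simp
    qed
  qed
  have upper: "\<exists>f \<in> Uset b c1 c2 s t. rkhs_sq_norm (Gam v) f \<le> ereal (2 * Upsilon v b c1 c2 s t)"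
  proof -
    have gen: "\<exists>f \<in> Uset b c1 c2 s t. rkhs_sq_norm (Gam v) f \<le> ereal (g1\<^sup>2 * q + 2 * g1 * g2 * H + g2\<^sup>2 * a)"
      if c1': "- (g1 * q + g2 * H) \<ge> B" and c2': "(g1 * H + g2 * a) - (g1 * q + g2 * H) \<ge> Z0" for g1 g2
    proof -
      define \<gamma> where "\<gamma> = (\<lambda>r. if r = -t then g1 else g2)"
      define f where "f = (\<lambda>x. \<Sum>g\<in>{-t,-s}. \<gamma> g * Gam v g x)"
      have fO: "f \<in> Omega" unfolding f_def by (rule comb_Omega[OF A v0 v_nonneg v_growth v_cont])
      have ft: "f (-t) = g1 * q + g2 * H" unfolding f_def \<gamma>_def using ts K11 K21 by simp
      have fs: "f (-s) = g1 * H + g2 * a" unfolding f_def \<gamma>_def using ts K12 K22 by simp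
      have fU: "f \<in> Uset b c1 c2 s t" unfolding Uset_eq using fO ft fs c1' c2' by simp
      have "rkhs_sq_norm (Gam v) f \<le> ereal (\<Sum>p\<in>{-t,-s}. \<Sum>q\<in>{-t,-s}. \<gamma> p * \<gamma> q * Gam v p q)"
        by (rule rkhs_upper[OF psd sym]) (auto simp: f_def)
      also have "(\<Sum>p\<in>{-t,-s}. \<Sum>q\<in>{-t,-s}. \<gamma> p * \<gamma> q * Gam v p q) = g1\<^sup>2 * q + 2 * g1 * g2 * H + g2\<^sup>2 * a"
        unfolding \<gamma>_def using ts K11 K12 K21 K22 by (simp add: power2_eq_square algebra_simps)
      finally show ?thesis using fU by blast
    qed
    show ?thesis
    proof (cases "H / q * B > c1 * s")
      case False
      have "c1 * s \<ge> H / q * B" using False by simp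
      then have zz: "Z0 \<le> B - H / q * B" unfolding Z0_def by simp
      have p1: "B \<le> - (- B / q * q + 0 * H)" using q0 by simp
      have p2: "Z0 \<le> (- B / q * H + 0 * a) - (- B / q * q + 0 * H)" using q0 zz by (simp add: algebra_simps)
      have e: "(- B / q)\<^sup>2 * q + 2 * (- B / q) * 0 * H + 0\<^sup>2 * a = 2 * (B\<^sup>2 / (2 * q))"
        using q0 by (simp add: power2_eq_square)
      have "\<exists>f \<in> Uset b c1 c2 s t. rkhs_sq_norm (Gam v) f \<le> ereal (2 * (B\<^sup>2 / (2 * q)))"
        using gen[OF p1 p2] unfolding e .
      then show ?thesis using False unfolding Ups by simp
    next
      case True
      define g1 where "g1 = - (al + be) / D"
      define g2 where "g2 = be / D"
      have "- (g1 * q + g2 * H) = (al * q + be * G) / D"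
        unfolding g1_def g2_def GH using D0 by (simp add: field_simps)
      then have e1: "- (g1 * q + g2 * H) = B" using alB D0 by simp
      have "(g1 * H + g2 * a) - (g1 * q + g2 * H) = (al * G + be * p) / D"
        unfolding g1_def g2_def GH aG using D0 by (simp add: field_simps)
      then have e2: "(g1 * H + g2 * a) - (g1 * q + g2 * H) = Z0" using beZ D0 by simp
      have e3: "g1\<^sup>2 * q + 2 * g1 * g2 * H + g2\<^sup>2 * a = 2 * (N / (2 * D))"
      proof -
        have "g1\<^sup>2 * q + 2 * g1 * g2 * H + g2\<^sup>2 * a = (al\<^sup>2 * q + 2 * al * be * G + be\<^sup>2 * p) / D\<^sup>2"
          unfolding g1_def g2_def GH aG using D0 by (simp add: field_simps power2_eq_square)
        also have "\<dots> = N / D" unfolding QN using D0 by (simp add: power2_eq_square)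
        finally show ?thesis by simp
      qed
      show ?thesis using gen[of g1 g2] e1 e2 e3 True unfolding Ups by simp
    qed
  qed
  have UO: "\<And>f. f \<in> Uset b c1 c2 s t \<Longrightarrow> rateI v f = rkhs_sq_norm (Gam v) f / 2"
    unfolding Uset_def rateI_def by simp
  show ?thesis
  proof (rule antisym)
    obtain f where fU: "f \<in> Uset b c1 c2 s t" and fb: "rkhs_sq_norm (Gam v) f \<le> ereal (2 * Upsilon v b c1 c2 s t)"
      using upper by blast
    have "(INF f \<in> Uset b c1 c2 s t. rateI v f) \<le> rateI v f" by (rule INF_lower[OF fU])
    also have "\<dots> \<le> ereal (Upsilon v b c1 c2 s t)" unfolding UO[OF fU] by (rule ereal_half_le[OF fb])
    finally show "(INF f \<in> Uset b c1 c2 s t. rateI v f) \<le> ereal (Upsilon v b c1 c2 s t)" .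
  next
    show "ereal (Upsilon v b c1 c2 s t) \<le> (INF f \<in> Uset b c1 c2 s t. rateI v f)"
    proof (rule INF_greatest)
      fix f assume fU: "f \<in> Uset b c1 c2 s t"
      show "ereal (Upsilon v b c1 c2 s t) \<le> rateI v f" unfolding UO[OF fU]
        by (rule ereal_half_ge[OF lower[OF fU]])
    qed
  qed
qed

end
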